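(* Let $c\in\mathbb{R}^{m\times n}$ be a matrix (entries may be of any sign) such that $c_i([n])=C$ for all $i\in[m]$, for some real $C$. Let $A$ be an allocation that minimizes $\max_{i\in[m]}c_i(A_i)$ among all allocations and, subject to this, minimizes $\sum_{i\in[m]}c_i(A_i)$. Then $\sum_{i\in[m]}c_i(A_i)\le\frac1m\sum_{i\in[m]}c_i([n])$.
   Context: Notation: $[k]=\{1,\dots,k\}$; for $S\subseteq[n]$, $c_i(S)=\sum_{j\in S}c_{i,j}$. An allocation is a tuple $(A_1,\dots,A_m)$ of pairwise disjoint subsets of $[n]$ whose union is $[n]$. *)

theory Defs
  imports Complex_Main
begin

definition cost :: "(nat \<Rightarrow> nat \<Rightarrow> real) \<Rightarrow> nat \<Rightarrow> nat set \<Rightarrow> real" where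
  "cost c i S = (\<Sum>j\<in>S. c i j)"

definition is_allocation :: "nat \<Rightarrow> nat \<Rightarrow> (nat \<Rightarrow> nat set) \<Rightarrow> bool" where
  "is_allocation m n A \<longleftrightarrow>
     (\<forall>i\<in>{1..m}. \<forall>k\<in>{1..m}. i \<noteq> k \<longrightarrow> A i \<inter> A k = {}) \<and>
     (\<Union>i\<in>{1..m}. A i) = {1..n}"

definition max_cost :: "nat \<Rightarrow> (nat \<Rightarrow> nat \<Rightarrow> real) \<Rightarrow> (nat \<Rightarrow> nat set) \<Rightarrow> real" where
  "max_cost m c A = Max ((\<lambda>i. cost c i (A i)) ` {1..m})"

definition total_cost :: "nat \<Rightarrow> (nat \<Rightarrow> nat \<Rightarrow> real) \<Rightarrow> (nat \<Rightarrow> nat set) \<Rightarrow> real" where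
  "total_cost m c A = (\<Sum>i\<in>{1..m}. cost c i (A i))"

end

theory Submission
  imports Defs
begin

lemma key:
  fixes I :: "nat set" and d :: "nat \<Rightarrow> nat \<Rightarrow> real" and M :: real
  assumes "finite I" "I \<noteq> {}" "\<forall>i\<in>I. d i i \<le> M"
   "\<forall>\<sigma>. bij_betw \<sigma> I I \<and> (\<forall>k\<in>I. d (\<sigma> k) k \<le> M) \<longrightarrow> (\<Sum>k\<in>I. d k k) \<le> (\<Sum>k\<in>I. d (\<sigma> k) k)"
  shows "\<exists>r\<in>I. (\<Sum>k\<in>I. d k k) \<le> (\<Sum>j\<in>I. d r j)"
  using assms
proof (induction "card I" arbitrary: I rule: less_induct)
  case less
  note fin = less.prems(1) and ne = less.prems(2) and diagM = less.prems(3) and hyp = less.prems(4)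
  show ?case
  proof (cases "card I = 1")
    case True
    then obtain k where "I = {k}" by (meson card_1_singletonE)
    then show ?thesis by simp
  next
    case False
    with fin ne have c2: "card I \<ge> 2"
      by (metis One_nat_def Suc_1 card_0_eq not_less_eq_eq le_antisym le_zero_eq)
    show ?thesis
    proof (cases "\<exists>k\<in>I. \<forall>r\<in>I-{k}. d k k \<le> d r k")
      case True
      then obtain k where kI: "k \<in> I" and kcol: "\<forall>r\<in>I-{k}. d k k \<le> d r k" by blast
      define J where "J = I - {k}"
      have IJ: "I = J \<union> {k}" "k \<notin> J" using kI J_def by auto
      have finJ: "finite J" using fin J_def by simp
      have cJ: "card J < card I" using kI fin J_def c2 by simp
      have neJ: "J \<noteq> {}"
      proof
        assume "J = {}"
        then have "I \<subseteq> {k}" using J_def by blast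
        then have "card I \<le> card {k}" by (rule card_mono[rotated]) simp
        with c2 show False by simp
      qed
      have diagJ: "\<forall>i\<in>J. d i i \<le> M" using diagM J_def by simp
      have hypJ: "\<forall>\<sigma>. bij_betw \<sigma> J J \<and> (\<forall>k\<in>J. d (\<sigma> k) k \<le> M) \<longrightarrow> (\<Sum>k\<in>J. d k k) \<le> (\<Sum>k\<in>J. d (\<sigma> k) k)"
      proof (intro allI impI)
        fix \<sigma> assume a: "bij_betw \<sigma> J J \<and> (\<forall>k\<in>J. d (\<sigma> k) k \<le> M)"
        define \<tau> where "\<tau> = (\<lambda>j. if j = k then k else \<sigma> j)"
        have bJ: "bij_betw \<tau> J J"
          using a IJ by (subst bij_betw_cong[of J \<tau> \<sigma>]) (auto simp: \<tau>_def)
        have bk: "bij_betw \<tau> {k} {k}" by (simp add: \<tau>_def bij_betw_def)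
        have "bij_betw \<tau> (J \<union> {k}) (J \<union> {k})"
          using bij_betw_combine[OF bJ bk] IJ by simp
        then have bI: "bij_betw \<tau> I I" using IJ by simp
        have "\<forall>j\<in>I. d (\<tau> j) j \<le> M" using a diagM kI IJ by (auto simp: \<tau>_def)
        with hyp bI have "(\<Sum>j\<in>I. d j j) \<le> (\<Sum>j\<in>I. d (\<tau> j) j)" by blast
        moreover have "(\<Sum>j\<in>I. d j j) = d k k + (\<Sum>j\<in>J. d j j)"
          using IJ finJ by simp
        moreover have "(\<Sum>j\<in>I. d (\<tau> j) j) = d k k + (\<Sum>j\<in>J. d (\<sigma> j) j)"
          using IJ finJ by (simp add: \<tau>_def) (rule sum.cong, auto)
        ultimately show "(\<Sum>k\<in>J. d k k) \<le> (\<Sum>k\<in>J. d (\<sigma> k) k)" by simp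
      qed
      from less.hyps[OF cJ finJ neJ diagJ hypJ] obtain r where rJ: "r \<in> J"
        and r: "(\<Sum>k\<in>J. d k k) \<le> (\<Sum>j\<in>J. d r j)" by blast
      have "d k k \<le> d r k" using kcol rJ J_def by blast
      moreover have "(\<Sum>j\<in>I. d j j) = d k k + (\<Sum>j\<in>J. d j j)"
          using IJ finJ by simp
      moreover have "(\<Sum>j\<in>I. d r j) = d r k + (\<Sum>j\<in>J. d r j)"
          using IJ finJ by simp
      ultimately have "(\<Sum>j\<in>I. d j j) \<le> (\<Sum>j\<in>I. d r j)" using r by simp
      then show ?thesis using rJ J_def by blast
    next
      case False
      then have "\<forall>k\<in>I. \<exists>r. r \<in> I - {k} \<and> d r k < d k k" by (auto simp: not_le)
      then obtain f where f: "\<forall>k\<in>I. f k \<in> I - {k} \<and> d (f k) k < d k k" by metis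
      define P where "P = (\<lambda>S. S \<subseteq> I \<and> S \<noteq> {} \<and> f ` S \<subseteq> S)"
      have "P I" using P_def ne f by auto
      then obtain S where PS: "P S" and Smin: "\<forall>S'. P S' \<longrightarrow> card S \<le> card S'"
        using ex_has_least_nat[of P I card] by blast
      have SI: "S \<subseteq> I" and Sne: "S \<noteq> {}" and fS: "f ` S \<subseteq> S" using PS P_def by auto
      have finS: "finite S" using SI fin finite_subset by blast
      have "P (f ` S)" using P_def SI fS Sne by auto
      then have "card S \<le> card (f ` S)" using Smin by blast
      moreover have "card (f ` S) \<le> card S" using finS card_image_le by blast
      ultimately have ceq: "card (f ` S) = card S" by simp
      have fSS: "f ` S = S" using card_subset_eq[OF finS fS ceq] .
      have injS: "inj_on f S" using eq_card_imp_inj_on[OF finS ceq] .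
      define \<sigma> where "\<sigma> = (\<lambda>j. if j \<in> S then f j else j)"
      have b1: "bij_betw \<sigma> S S"
        using fSS injS by (subst bij_betw_cong[of S \<sigma> f]) (auto simp: \<sigma>_def bij_betw_def)
      have b2: "bij_betw \<sigma> (I - S) (I - S)"
        by (subst bij_betw_cong[of "I - S" \<sigma> id]) (auto simp: \<sigma>_def)
      have "bij_betw \<sigma> (S \<union> (I - S)) (S \<union> (I - S))"
        using bij_betw_combine[OF b1 b2] by blast
      moreover have "S \<union> (I - S) = I" using SI by blast
      ultimately have bI: "bij_betw \<sigma> I I" by simp
      have ent: "\<forall>j\<in>I. d (\<sigma> j) j \<le> M"
      proof
        fix j assume jI: "j \<in> I"
        show "d (\<sigma> j) j \<le> M"
        proof (cases "j \<in> S")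
          case True
          then have "d (\<sigma> j) j < d j j" using f jI by (simp add: \<sigma>_def)
          then show ?thesis using diagM jI by fastforce
        next
          case False
          then show ?thesis using diagM jI by (simp add: \<sigma>_def)
        qed
      qed
      with hyp bI have le: "(\<Sum>j\<in>I. d j j) \<le> (\<Sum>j\<in>I. d (\<sigma> j) j)" by blast
      have s1: "(\<Sum>j\<in>I. d j j) = (\<Sum>j\<in>S. d j j) + (\<Sum>j\<in>I-S. d j j)"
        using SI fin by (metis sum.subset_diff add.commute)
      have s2: "(\<Sum>j\<in>I. d (\<sigma> j) j) = (\<Sum>j\<in>S. d (f j) j) + (\<Sum>j\<in>I-S. d j j)"
      proof -
        have "(\<Sum>j\<in>I. d (\<sigma> j) j) = (\<Sum>j\<in>S. d (\<sigma> j) j) + (\<Sum>j\<in>I-S. d (\<sigma> j) j)"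
          using SI fin by (metis sum.subset_diff add.commute)
        moreover have "(\<Sum>j\<in>S. d (\<sigma> j) j) = (\<Sum>j\<in>S. d (f j) j)"
          by (rule sum.cong) (auto simp: \<sigma>_def)
        moreover have "(\<Sum>j\<in>I-S. d (\<sigma> j) j) = (\<Sum>j\<in>I-S. d j j)"
          by (rule sum.cong) (auto simp: \<sigma>_def)
        ultimately show ?thesis by simp
      qed
      have "(\<Sum>j\<in>S. d (f j) j) < (\<Sum>j\<in>S. d j j)"
        using sum_strict_mono[OF finS Sne, of "\<lambda>j. d (f j) j" "\<lambda>j. d j j"] f SI by blast
      with le s1 s2 show ?thesis by simp
    qed
  qed
qed

theorem mainTheorem5:
  fixes m n :: nat and c :: "nat \<Rightarrow> nat \<Rightarrow> real" and C :: real
    and A :: "nat \<Rightarrow> nat set"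
  assumes identical_totals: "\<forall>i\<in>{1..m}. cost c i {1..n} = C"
    and alloc: "is_allocation m n A"
    and min_max: "\<forall>B. is_allocation m n B \<longrightarrow> max_cost m c A \<le> max_cost m c B"
    and min_sum: "\<forall>B. is_allocation m n B \<and> max_cost m c B = max_cost m c A
                      \<longrightarrow> total_cost m c A \<le> total_cost m c B"
  shows "total_cost m c A \<le> (1 / real m) * (\<Sum>i\<in>{1..m}. cost c i {1..n})"
proof (cases "m = 0")
  case True
  then show ?thesis by (simp add: total_cost_def)
next
  case False
  define I where "I = {1..m}"
  define d where "d = (\<lambda>i j. cost c i (A j))"
  define M where "M = max_cost m c A"
  have finI: "finite I" and neI: "I \<noteq> {}" using False I_def by auto
  have disj: "\<forall>i\<in>I. \<forall>k\<in>I. i \<noteq> k \<longrightarrow> A i \<inter> A k = {}" and un: "(\<Union>i\<in>I. A i) = {1..n}"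
    using alloc by (auto simp: is_allocation_def I_def)
  have finA: "\<forall>i\<in>I. finite (A i)"
  proof
    fix i assume "i \<in> I"
    then have "A i \<subseteq> {1..n}" using un by blast
    then show "finite (A i)" using finite_subset by blast
  qed
  have diag: "\<forall>i\<in>I. d i i \<le> M"
    using finI by (auto simp: d_def M_def max_cost_def I_def)
  have hyp: "\<forall>\<sigma>. bij_betw \<sigma> I I \<and> (\<forall>k\<in>I. d (\<sigma> k) k \<le> M) \<longrightarrow> (\<Sum>k\<in>I. d k k) \<le> (\<Sum>k\<in>I. d (\<sigma> k) k)"
  proof (intro allI impI)
    fix \<sigma> assume a: "bij_betw \<sigma> I I \<and> (\<forall>k\<in>I. d (\<sigma> k) k \<le> M)"
    then have bs: "bij_betw \<sigma> I I" and ent: "\<forall>k\<in>I. d (\<sigma> k) k \<le> M" by auto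
    define \<tau> where "\<tau> = inv_into I \<sigma>"
    have bt: "bij_betw \<tau> I I" using bs \<tau>_def by (simp add: bij_betw_inv_into)
    define B where "B = (\<lambda>i. A (\<tau> i))"
    have allocB: "is_allocation m n B"
    proof -
      have "\<forall>i\<in>I. \<forall>k\<in>I. i \<noteq> k \<longrightarrow> B i \<inter> B k = {}"
      proof (intro ballI impI)
        fix i k assume "i \<in> I" "k \<in> I" "i \<noteq> k"
        moreover then have "\<tau> i \<noteq> \<tau> k" "\<tau> i \<in> I" "\<tau> k \<in> I"
          using bt by (auto simp: bij_betw_def inj_on_def)
        ultimately show "B i \<inter> B k = {}" using disj B_def by blast
      qed
      moreover have "(\<Union>i\<in>I. B i) = {1..n}"
      proof -
        have "(\<Union>i\<in>I. B i) = (\<Union>k\<in>\<tau> ` I. A k)" by (simp add: B_def)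
        also have "\<dots> = (\<Union>k\<in>I. A k)" using bt by (simp add: bij_betw_imp_surj_on)
        finally show ?thesis using un by simp
      qed
      ultimately show ?thesis by (simp add: is_allocation_def I_def)
    qed
    have sf: "\<And>i. i \<in> I \<Longrightarrow> \<sigma> (\<tau> i) = i"
      using bs \<tau>_def by (meson bij_betw_inv_into_right)
    have ts: "\<And>k. k \<in> I \<Longrightarrow> \<tau> (\<sigma> k) = k"
      using bs \<tau>_def by (meson bij_betw_inv_into_left)
    have "max_cost m c B \<le> M"
    proof -
      have "\<forall>i\<in>I. cost c i (B i) \<le> M"
      proof
        fix i assume iI: "i \<in> I"
        then have "\<tau> i \<in> I" using bt by (meson bij_betwE)
        then have "d (\<sigma> (\<tau> i)) (\<tau> i) \<le> M" using ent by blast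
        then show "cost c i (B i) \<le> M" using sf[OF iI] by (simp add: d_def B_def)
      qed
      then show ?thesis using finI neI by (simp add: max_cost_def I_def)
    qed
    moreover have "M \<le> max_cost m c B" using min_max allocB M_def by blast
    ultimately have "max_cost m c B = max_cost m c A" using M_def by simp
    then have le: "total_cost m c A \<le> total_cost m c B" using min_sum allocB by blast
    have "total_cost m c B = (\<Sum>i\<in>I. cost c i (B i))" by (simp add: total_cost_def I_def)
    also have "\<dots> = (\<Sum>k\<in>I. cost c (\<sigma> k) (B (\<sigma> k)))"
      using sum.reindex_bij_betw[OF bs, of "\<lambda>i. cost c i (B i)"] by simp
    also have "\<dots> = (\<Sum>k\<in>I. d (\<sigma> k) k)"
      by (rule sum.cong) (auto simp: B_def d_def ts)
    finally have "total_cost m c B = (\<Sum>k\<in>I. d (\<sigma> k) k)" .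
    moreover have "total_cost m c A = (\<Sum>k\<in>I. d k k)" by (simp add: total_cost_def I_def d_def)
    ultimately show "(\<Sum>k\<in>I. d k k) \<le> (\<Sum>k\<in>I. d (\<sigma> k) k)" using le by simp
  qed
  obtain r where rI: "r \<in> I" and r: "(\<Sum>k\<in>I. d k k) \<le> (\<Sum>j\<in>I. d r j)"
    using key[OF finI neI diag hyp] by blast
  have "(\<Sum>j\<in>I. d r j) = cost c r (\<Union>j\<in>I. A j)"
    unfolding d_def cost_def using sum.UNION_disjoint[OF finI finA disj, of "c r"] by simp
  also have "\<dots> = C" using un identical_totals rI I_def by simp
  finally have "total_cost m c A \<le> C" using r by (simp add: total_cost_def I_def d_def)
  moreover have "(1 / real m) * (\<Sum>i\<in>{1..m}. cost c i {1..n}) = C"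
    using identical_totals False by simp
  ultimately show ?thesis by simp
qed

end
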